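(* Let $m\ge1$ be an integer and $\mathcal{U}=\{S_0,S_{2,1^0},\ldots,S_{2,1^{m-1}}\}$. Define vectors $(y_0,\ldots,y_m)\in\mathbb{R}^{m+1}$: $\mathbf{d}_{1,m}=(1,0,\ldots,0)$; $\mathbf{d}_{2,m}=(1,1,\ldots,1)$; $\mathbf{d}_{3,m}$ with $y_0=1,y_1=2$ and $y_k=k$ for $k\ge2$; $\mathbf{d}_{4,m}$ with $y_0=1$ and $y_k=k+2$ for $k\ge1$; $\mathbf{d}_{5,m}$ with $y_0=2,y_1=4$ and $y_k=2k+1$ for $k\ge2$. Then $\mathbf{d}_{j,m}\in\operatorname{trop}(\mathcal{N}_{\mathcal{U}})$ for each $1\le j\le5$.
   Context: All graphs are finite; $\hom(H;G)$ is the number of graph homomorphisms from $H$ to $G$. $S_0$ is a single vertex; for $k\ge0$, $S_{2,1^k}$ is the tree with vertex set $\{1,\ldots,k+3\}$ and edge set $\{\{1,j\}:2\le j\le k+2\}\cup\{\{k+2,k+3\}\}$. $\mathcal{N}_{\mathcal{U}}$ is the set of vectors $(\hom(S_0;G),\hom(S_{2,1^0};G),\ldots,\hom(S_{2,1^{m-1}};G))$ over all graphs $G$; $\operatorname{trop}(\mathcal{N}_{\mathcal{U}})=\lim_{\tau\to\infty}\log_\tau(\mathcal{N}_{\mathcal{U}}\cap\mathbb{R}^{m+1}_{>0})$ (coordinatewise logarithm), which equals the closure of the conical hull of the coordinatewise logarithms of the points of $\mathcal{N}_{\mathcal{U}}$ with all coordinates positive. *)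

theory Defs
  imports "HOL-Analysis.Analysis"
begin

text \<open>A finite simple graph with vertex set {0..<n} and symmetric irreflexive
adjacency relation E (every finite graph is isomorphic to one of this form).\<close>
definition simple_graph :: "nat \<Rightarrow> (nat \<Rightarrow> nat \<Rightarrow> bool) \<Rightarrow> bool" where
  "simple_graph n E \<longleftrightarrow> (\<forall>i j. E i j \<longrightarrow> E j i) \<and> (\<forall>i. \<not> E i i)
     \<and> (\<forall>i j. E i j \<longrightarrow> i < n \<and> j < n)"

definition hom_count :: "nat \<Rightarrow> (nat \<Rightarrow> nat \<Rightarrow> bool) \<Rightarrow> nat \<Rightarrow> (nat \<Rightarrow> nat \<Rightarrow> bool) \<Rightarrow> nat" where
  "hom_count nH EH n E =
     card {f \<in> {..<nH} \<rightarrow>\<^sub>E {..<n}. \<forall>i<nH. \<forall>j<nH. EH i j \<longrightarrow> E (f i) (f j)}"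

definition S0_edges :: "nat \<Rightarrow> nat \<Rightarrow> bool" where
  "S0_edges i j \<longleftrightarrow> False"

text \<open>S_{2,1^k}, with vertices relabelled 1..k+3 to 0..k+2: edges {0,j} for
1 \<le> j \<le> k+1 and the edge {k+1,k+2}.\<close>
definition S21_edges :: "nat \<Rightarrow> nat \<Rightarrow> nat \<Rightarrow> bool" where
  "S21_edges k i j \<longleftrightarrow>
     (i = 0 \<and> 1 \<le> j \<and> j \<le> k + 1) \<or> (j = 0 \<and> 1 \<le> i \<and> i \<le> k + 1) \<or>
     (i = k + 1 \<and> j = k + 2) \<or> (i = k + 2 \<and> j = k + 1)"

text \<open>The homomorphism-count vector (hom(S_0;G), hom(S_{2,1^0};G), ..., hom(S_{2,1^{m-1}};G)),
as a function on indices 0..m (0 outside).\<close>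
definition hom_vec :: "nat \<Rightarrow> nat \<Rightarrow> (nat \<Rightarrow> nat \<Rightarrow> bool) \<Rightarrow> nat \<Rightarrow> real" where
  "hom_vec m n E = (\<lambda>i. if i = 0 then real (hom_count 1 S0_edges n E)
                        else if i \<le> m then real (hom_count (i + 2) (S21_edges (i - 1)) n E)
                        else 0)"

text \<open>N_U (vectors in R^{m+1}, encoded as functions supported on {0..m}).\<close>
definition N_U :: "nat \<Rightarrow> (nat \<Rightarrow> real) set" where
  "N_U m = {hom_vec m n E | n E. simple_graph n E}"

definition conical_hull :: "(nat \<Rightarrow> real) set \<Rightarrow> (nat \<Rightarrow> real) set" where
  "conical_hull S = {x. \<exists>F c. finite F \<and> F \<subseteq> S \<and> (\<forall>v\<in>F. c v \<ge> 0) \<and>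
                        x = (\<lambda>i. \<Sum>v\<in>F. c v * v i)}"

definition trop_N_U :: "nat \<Rightarrow> (nat \<Rightarrow> real) set" where
  "trop_N_U m = closure (conical_hull
      ((\<lambda>v. \<lambda>i. if i \<le> m then ln (v i) else 0) ` {v \<in> N_U m. \<forall>i\<le>m. v i > 0}))"

definition dvec :: "nat \<Rightarrow> nat \<Rightarrow> nat \<Rightarrow> real" where
  "dvec j m = (\<lambda>k. if k > m then 0 else
     (if j = 1 then (if k = 0 then 1 else 0)
      else if j = 2 then 1
      else if j = 3 then (if k = 0 then 1 else if k = 1 then 2 else real k)
      else if j = 4 then (if k = 0 then 1 else real k + 2)
      else (if k = 0 then 2 else if k = 1 then 4 else 2 * real k + 1)))"

end

theory Submission
  imports Defs
begin


lemma tendsto_fun_componentwise: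
  fixes f :: "nat \<Rightarrow> nat \<Rightarrow> real"
  assumes "\<And>i. ((\<lambda>t. f t i) \<longlongrightarrow> l i) sequentially"
  shows "(f \<longlongrightarrow> l) sequentially"
proof -
  have "limitin (product_topology (\<lambda>i. euclidean) UNIV) f l sequentially"
    using assms by (simp add: limitin_componentwise)
  then show ?thesis by (simp add: euclidean_product_topology)
qed

lemma log_ratio_limit:
  fixes h g :: "nat \<Rightarrow> real" and a :: nat and A B :: real
  assumes g: "filterlim g at_top sequentially" and AB: "A > 0" "B > 0"
    and ev: "\<forall>\<^sub>F t in sequentially. A * g t ^ a \<le> h t \<and> h t \<le> B * g t ^ a"
  shows "((\<lambda>t. ln (h t) / ln (g t)) \<longlongrightarrow> real a) sequentially"
proof -
  have lg: "filterlim (\<lambda>t. ln (g t)) at_top sequentially"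
    using g by (rule filterlim_compose[OF ln_at_top])
  have l1: "((\<lambda>t. (ln A + a * ln (g t)) / ln (g t)) \<longlongrightarrow> real a) sequentially"
  proof -
    have "((\<lambda>t. ln A / ln (g t) + real a) \<longlongrightarrow> 0 + real a) sequentially"
      by (intro tendsto_intros tendsto_divide_0[OF tendsto_const] filterlim_at_top_imp_at_infinity lg)
    moreover have "\<forall>\<^sub>F t in sequentially. ln A / ln (g t) + real a = (ln A + a * ln (g t)) / ln (g t)"
      using lg[unfolded filterlim_at_top] by (auto elim!: eventually_mono[OF _] dest!: spec[of _ 1] simp: field_simps)
    ultimately show ?thesis by (simp add: tendsto_cong)
  qed
  have l2: "((\<lambda>t. (ln B + a * ln (g t)) / ln (g t)) \<longlongrightarrow> real a) sequentially"
  proof -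
    have "((\<lambda>t. ln B / ln (g t) + real a) \<longlongrightarrow> 0 + real a) sequentially"
      by (intro tendsto_intros tendsto_divide_0[OF tendsto_const] filterlim_at_top_imp_at_infinity lg)
    moreover have "\<forall>\<^sub>F t in sequentially. ln B / ln (g t) + real a = (ln B + a * ln (g t)) / ln (g t)"
      using lg[unfolded filterlim_at_top] by (auto elim!: eventually_mono[OF _] dest!: spec[of _ 1] simp: field_simps)
    ultimately show ?thesis by (simp add: tendsto_cong)
  qed
  have ev2: "\<forall>\<^sub>F t in sequentially. g t > 1"
    using g[unfolded filterlim_at_top_dense] by auto
  show ?thesis
  proof (rule tendsto_sandwich[OF _ _ l1 l2])
    show "\<forall>\<^sub>F t in sequentially. (ln A + a * ln (g t)) / ln (g t) \<le> ln (h t) / ln (g t)"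
      using ev ev2
    proof eventually_elim
      case (elim t)
      have gp: "g t ^ a > 0" using elim by simp
      have hp: "h t > 0" using elim AB gp by (smt (verit) mult_pos_pos)
      have "ln A + a * ln (g t) = ln (A * g t ^ a)" using elim AB by (simp add: ln_mult ln_realpow)
      also have "\<dots> \<le> ln (h t)" using elim AB gp hp by (subst ln_le_cancel_iff) auto
      finally show ?case using elim by (intro divide_right_mono) auto
    qed
    show "\<forall>\<^sub>F t in sequentially. ln (h t) / ln (g t) \<le> (ln B + a * ln (g t)) / ln (g t)"
      using ev ev2
    proof eventually_elim
      case (elim t)
      have gp: "g t ^ a > 0" using elim by simp
      have hp: "h t > 0" using elim AB gp by (smt (verit) mult_pos_pos)
      have "ln (h t) \<le> ln (B * g t ^ a)" using elim AB gp hp by (subst ln_le_cancel_iff) auto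
      also have "\<dots> = ln B + a * ln (g t)" using elim AB by (simp add: ln_mult ln_realpow)
      finally show ?case using elim by (intro divide_right_mono) auto
    qed
  qed
qed

lemma zero_in_trop: "(\<lambda>i. 0) \<in> conical_hull S"
  unfolding conical_hull_def by (rule CollectI, rule exI[of _ "{}"]) auto

lemma in_trop:
  fixes N :: "nat \<Rightarrow> nat" and E :: "nat \<Rightarrow> nat \<Rightarrow> nat \<Rightarrow> bool" and g :: "nat \<Rightarrow> real"
  assumes sg: "\<And>t. simple_graph (N t) (E t)"
    and pos: "\<And>t i. i \<le> m \<Longrightarrow> hom_vec m (N t) (E t) i > 0"
    and g1: "\<And>t. g t \<ge> 1"
    and lim: "\<And>i. i \<le> m \<Longrightarrow> ((\<lambda>t. ln (hom_vec m (N t) (E t) i) / ln (g t)) \<longlongrightarrow> d i) sequentially"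
    and d0: "\<And>i. i > m \<Longrightarrow> d i = 0"
  shows "d \<in> trop_N_U m"
proof -
  define L where "L = (\<lambda>v::nat\<Rightarrow>real. \<lambda>i. if i \<le> m then ln (v i) else 0)"
  define x where "x = (\<lambda>t. \<lambda>i. (1 / ln (g t)) * L (hom_vec m (N t) (E t)) i)"
  have xin: "x t \<in> conical_hull (L ` {v \<in> N_U m. \<forall>i\<le>m. v i > 0})" for t
  proof -
    have v: "hom_vec m (N t) (E t) \<in> {v \<in> N_U m. \<forall>i\<le>m. v i > 0}"
      using sg pos unfolding N_U_def by blast
    show ?thesis unfolding conical_hull_def
      apply (rule CollectI)
      apply (rule exI[of _ "{L (hom_vec m (N t) (E t))}"])
      apply (rule exI[of _ "\<lambda>_. 1 / ln (g t)"])
      using v g1[of t] by (auto simp: x_def)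
  qed
  have "(x \<longlongrightarrow> d) sequentially"
  proof (rule tendsto_fun_componentwise)
    fix i
    show "((\<lambda>t. x t i) \<longlongrightarrow> d i) sequentially"
    proof (cases "i \<le> m")
      case True
      then show ?thesis using lim[OF True] by (simp add: x_def L_def)
    next
      case False
      then show ?thesis using d0[of i] by (simp add: x_def L_def)
    qed
  qed
  then show ?thesis unfolding trop_N_U_def L_def[symmetric] closure_sequential
    using xin by blast
qed



definition nbr :: "nat \<Rightarrow> (nat \<Rightarrow> nat \<Rightarrow> bool) \<Rightarrow> nat \<Rightarrow> nat set" where
  "nbr n E v = {u. u < n \<and> E v u}"

lemma hom_S0: "hom_count 1 S0_edges n E = n"
  unfolding hom_count_def S0_edges_def by (simp add: card_PiE)

lemma hom_S21:
  assumes sg: "simple_graph n E"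
  shows "hom_count (k+3) (S21_edges k) n E =
    (\<Sum>v<n. \<Sum>u\<in>nbr n E v. card (nbr n E u) * card (nbr n E v) ^ k)"
proof -
  have sym: "\<And>i j. E i j \<Longrightarrow> E j i" and bnd: "\<And>i j. E i j \<Longrightarrow> i < n \<and> j < n"
    using sg unfolding simple_graph_def by blast+
  define H where "H = {f \<in> {..<k+3} \<rightarrow>\<^sub>E {..<n}. \<forall>i<k+3. \<forall>j<k+3. S21_edges k i j \<longrightarrow> E (f i) (f j)}"
  define T where "T = (SIGMA v:{..<n}. SIGMA u:nbr n E v. nbr n E u \<times> ({1..k} \<rightarrow>\<^sub>E nbr n E v))"
  define \<phi> where "\<phi> = (\<lambda>f::nat\<Rightarrow>nat. (f 0, f (k+1), f (k+2), restrict f {1..k}))"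
  define \<psi> where "\<psi> = (\<lambda>(v::nat, u::nat, w::nat, g::nat\<Rightarrow>nat). (\<lambda>i. if i = 0 then v else if i = k+1 then u else if i = k+2 then w else g i))"
  have "bij_betw \<phi> H T"
  proof (rule bij_betw_byWitness[where f'=\<psi>])
    show "\<forall>a\<in>H. \<psi> (\<phi> a) = a"
    proof
      fix f assume f: "f \<in> H"
      show "\<psi> (\<phi> f) = f"
      proof
        fix i
        show "\<psi> (\<phi> f) i = f i"
          using f unfolding H_def \<phi>_def \<psi>_def by (auto simp: PiE_def extensional_def)
      qed
    qed
    show "\<forall>a'\<in>T. \<phi> (\<psi> a') = a'"
    proof
      fix a assume a: "a \<in> T"
      then obtain v u w g where a': "a = (v,u,w,g)" by (cases a) auto
      have "restrict (\<psi> a) {1..k} = g"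
      proof
        fix i show "restrict (\<psi> a) {1..k} i = g i"
          using a unfolding a' T_def \<psi>_def by (auto simp: PiE_def extensional_def)
      qed
      then show "\<phi> (\<psi> a) = a" unfolding a' \<phi>_def \<psi>_def by simp
    qed
    show "\<phi> ` H \<subseteq> T"
    proof
      fix x assume "x \<in> \<phi> ` H"
      then obtain f where f: "f \<in> H" and x: "x = \<phi> f" by blast
      have f0: "f 0 < n" using f unfolding H_def by auto
      have fr: "\<And>j. j < k+3 \<Longrightarrow> f j < n" using f unfolding H_def by (auto simp: PiE_def Pi_def)
      have e1: "E (f 0) (f j)" if "1 \<le> j" "j \<le> k+1" for j
      proof -
        have "\<forall>i<k+3. \<forall>j<k+3. S21_edges k i j \<longrightarrow> E (f i) (f j)" using f unfolding H_def by blast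
        then have "S21_edges k 0 j \<longrightarrow> E (f 0) (f j)" using that by auto
        then show ?thesis using that unfolding S21_edges_def by auto
      qed
      have e2: "E (f (k+1)) (f (k+2))"
      proof -
        have "\<forall>i<k+3. \<forall>j<k+3. S21_edges k i j \<longrightarrow> E (f i) (f j)" using f unfolding H_def by blast
        then have "S21_edges k (k+1) (k+2) \<longrightarrow> E (f (k+1)) (f (k+2))" by auto
        then show ?thesis unfolding S21_edges_def by auto
      qed
      show "x \<in> T" unfolding x \<phi>_def T_def nbr_def
        using f0 e1 e2 bnd fr by (auto simp: PiE_def extensional_def)
    qed
    show "\<psi> ` T \<subseteq> H"
    proof
      fix x assume "x \<in> \<psi> ` T"
      then obtain b where b: "b \<in> T" and xb: "x = \<psi> b" by blast
      obtain v u w g where bb: "b = (v,u,w,g)" by (cases b) auto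
      have a: "(v,u,w,g) \<in> T" and x: "x = \<psi> (v,u,w,g)" using b xb bb by auto
      have v: "v < n" and u: "E v u" and w: "E u w" and g: "\<And>i. i \<in> {1..k} \<Longrightarrow> E v (g i)"
        and gu: "\<And>i. i \<notin> {1..k} \<Longrightarrow> g i = undefined"
        using a unfolding T_def nbr_def by (auto simp: PiE_def extensional_def)
      have x0: "x 0 = v" and x1: "x (k+1) = u" and x2: "x (k+2) = w"
        and xg: "\<And>i. i \<noteq> 0 \<Longrightarrow> i \<noteq> k+1 \<Longrightarrow> i \<noteq> k+2 \<Longrightarrow> x i = g i"
        unfolding x \<psi>_def by auto
      have nb: "E v (x j)" if "1 \<le> j" "j \<le> k+1" for j
      proof (cases "j = k+1")
        case True then show ?thesis using x1 u by simp
      next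
        case False then show ?thesis using xg[of j] g[of j] that by simp
      qed
      have ed: "E (x i) (x j)" if "S21_edges k i j" for i j
        using that unfolding S21_edges_def
      proof (elim disjE conjE)
        assume "i = 0" "1 \<le> j" "j \<le> k+1" then show ?thesis using nb x0 by simp
      next
        assume "j = 0" "1 \<le> i" "i \<le> k+1" then show ?thesis using nb x0 sym by simp
      next
        assume "i = k+1" "j = k+2" then show ?thesis using x1 x2 w by simp
      next
        assume "i = k+2" "j = k+1" then show ?thesis using x1 x2 w sym by simp
      qed
      have rng: "x \<in> {..<k+3} \<rightarrow>\<^sub>E {..<n}"
      proof (rule PiE_I)
        fix i assume i: "i \<in> {..<k+3}"
        show "x i \<in> {..<n}"
        proof (cases "i = 0")
          case True then show ?thesis using x0 v by simp
        next
          case False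
          show ?thesis
          proof (cases "i = k+2")
            case True then show ?thesis using x2 w bnd by auto
          next
            case False
            then have "E v (x i)" using nb[of i] i \<open>i \<noteq> 0\<close> by auto
            then show ?thesis using bnd by auto
          qed
        qed
      next
        fix i assume i: "i \<notin> {..<k+3}"
        then show "x i = undefined" using xg[of i] gu[of i] by simp
      qed
      show "x \<in> H" unfolding H_def using rng ed by blast
    qed
  qed
  then have "card H = card T" by (rule bij_betw_same_card)
  also have "card T = (\<Sum>v<n. \<Sum>u\<in>nbr n E v. card (nbr n E u) * card (nbr n E v) ^ k)"
    unfolding T_def
  proof -
    have fin: "finite (nbr n E v)" for v unfolding nbr_def by auto
    show "card (SIGMA v:{..<n}. SIGMA u:nbr n E v. nbr n E u \<times> ({1..k} \<rightarrow>\<^sub>E nbr n E v)) =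
      (\<Sum>v<n. \<Sum>u\<in>nbr n E v. card (nbr n E u) * card (nbr n E v) ^ k)"
      using fin by (simp add: card_cartesian_product card_PiE finite_PiE)
  qed
  finally show ?thesis unfolding hom_count_def H_def .
qed



definition edgeE :: "nat \<Rightarrow> nat \<Rightarrow> bool" where
  "edgeE i j \<longleftrightarrow> (i = 0 \<and> j = 1) \<or> (i = 1 \<and> j = 0)"

lemma edge_sg: "simple_graph (n+2) edgeE"
  unfolding simple_graph_def edgeE_def by auto

lemma edge_count: "hom_count (k+3) (S21_edges k) (n+2) edgeE = 2"
proof -
  define N where "N = n+2"
  have nb0: "nbr N edgeE 0 = {1}" and nb1: "nbr N edgeE (Suc 0) = {0}"
    and nbv: "\<And>v. v \<ge> 2 \<Longrightarrow> nbr N edgeE v = {}"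
    unfolding nbr_def edgeE_def N_def by auto
  have F: "(\<Sum>u\<in>nbr N edgeE v. card (nbr N edgeE u) * card (nbr N edgeE v) ^ k) = (if v < 2 then 1 else 0)" for v
  proof -
    consider "v = 0" | "v = 1" | "v \<ge> 2" by linarith
    then show ?thesis by cases (simp_all add: nb0 nb1 nbv)
  qed
  have "(\<Sum>v<N. \<Sum>u\<in>nbr N edgeE v. card (nbr N edgeE u) * card (nbr N edgeE v) ^ k)
      = (\<Sum>v<N. if v < 2 then 1 else 0)" by (simp only: F)
  also have "\<dots> = (\<Sum>v\<in>{v\<in>{..<N}. v < 2}. 1)" by (rule sum.inter_filter[symmetric]) simp
  also have "{v\<in>{..<N}. v < 2} = {0,1}" unfolding N_def by auto
  finally have "(\<Sum>v<N. \<Sum>u\<in>nbr N edgeE v. card (nbr N edgeE u) * card (nbr N edgeE v) ^ k) = 2" by simp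
  moreover have "hom_count (k+3) (S21_edges k) N edgeE = (\<Sum>v<N. \<Sum>u\<in>nbr N edgeE v. card (nbr N edgeE u) * card (nbr N edgeE v) ^ k)"
    unfolding N_def by (rule hom_S21[OF edge_sg])
  ultimately show ?thesis unfolding N_def by simp
qed

definition starE :: "nat \<Rightarrow> nat \<Rightarrow> nat \<Rightarrow> bool" where
  "starE n i j \<longleftrightarrow> (i = 0 \<and> 1 \<le> j \<and> j \<le> n) \<or> (j = 0 \<and> 1 \<le> i \<and> i \<le> n)"

lemma star_sg: "simple_graph (n+1) (starE n)"
  unfolding simple_graph_def starE_def by auto

lemma star_count: "hom_count (k+3) (S21_edges k) (n+1) (starE n) = n^(k+1) + n^2"
proof -
  define N where "N = n+1"
  have nb0: "nbr N (starE n) 0 = {1..n}" 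
    and nbv: "\<And>v. v \<in> {1..n} \<Longrightarrow> nbr N (starE n) v = {0}"
    unfolding nbr_def starE_def N_def by auto
  have U: "{..<N} = insert 0 {1..n}" unfolding N_def by auto
  have "(\<Sum>v<N. \<Sum>u\<in>nbr N (starE n) v. card (nbr N (starE n) u) * card (nbr N (starE n) v) ^ k)
      = (\<Sum>u\<in>{1..n}. card (nbr N (starE n) u) * n ^ k) + (\<Sum>v\<in>{1..n}. \<Sum>u\<in>nbr N (starE n) v. card (nbr N (starE n) u) * card (nbr N (starE n) v) ^ k)"
    unfolding U by (simp add: nb0)
  also have "\<dots> = (\<Sum>u\<in>{1..n}. n ^ k) + (\<Sum>v\<in>{1..n}. n)"
    by (intro arg_cong2[where f="(+)"] sum.cong refl) (simp_all add: nbv nb0)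
  also have "\<dots> = n^(k+1) + n^2" by (simp add: power2_eq_square)
  finally have "(\<Sum>v<N. \<Sum>u\<in>nbr N (starE n) v. card (nbr N (starE n) u) * card (nbr N (starE n) v) ^ k) = n^(k+1) + n^2" .
  moreover have "hom_count (k+3) (S21_edges k) N (starE n) = (\<Sum>v<N. \<Sum>u\<in>nbr N (starE n) v. card (nbr N (starE n) u) * card (nbr N (starE n) v) ^ k)"
    unfolding N_def by (rule hom_S21[OF star_sg])
  ultimately show ?thesis unfolding N_def by simp
qed

definition compE :: "nat \<Rightarrow> nat \<Rightarrow> nat \<Rightarrow> bool" where
  "compE n i j \<longleftrightarrow> i < n \<and> j < n \<and> i \<noteq> j"

lemma comp_sg: "simple_graph n (compE n)"
  unfolding simple_graph_def compE_def by auto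

lemma comp_count: "hom_count (k+3) (S21_edges k) n (compE n) = n * (n-1)^(k+2)"
proof -
  have nb: "\<And>v. v < n \<Longrightarrow> nbr n (compE n) v = {..<n} - {v}"
    unfolding nbr_def compE_def by auto
  have c: "\<And>v. v < n \<Longrightarrow> card (nbr n (compE n) v) = n - 1" using nb by simp
  have "(\<Sum>v<n. \<Sum>u\<in>nbr n (compE n) v. card (nbr n (compE n) u) * card (nbr n (compE n) v) ^ k)
     = (\<Sum>v<n. \<Sum>u\<in>nbr n (compE n) v. (n-1) * (n-1) ^ k)"
    by (intro sum.cong refl) (auto simp: c nb)
  also have "\<dots> = (\<Sum>v<n. (n-1) * ((n-1) * (n-1) ^ k))"
    by (intro sum.cong refl) (simp add: nb)
  also have "\<dots> = n * (n-1)^(k+2)" by simp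
  finally show ?thesis using hom_S21[OF comp_sg] by simp
qed



definition hubE :: "nat \<Rightarrow> nat \<Rightarrow> nat \<Rightarrow> bool" where
  "hubE n a b \<longleftrightarrow> (a = n^2 \<and> b < n^2) \<or> (b = n^2 \<and> a < n^2) \<or>
     (a < n^2 \<and> b < n^2 \<and> a \<noteq> b \<and> a div n = b div n)"

lemma hub_sg: "simple_graph (n^2+1) (hubE n)"
  unfolding simple_graph_def hubE_def by auto

lemma div_block: "0 < (n::nat) \<Longrightarrow> (b div n = q) \<longleftrightarrow> (q*n \<le> b \<and> b < q*n+n)"
  by (metis add.commute div_nat_eqI dividend_less_div_times mult.commute
    mult_Suc times_div_less_eq_dividend)

lemma hub_count:
  assumes n: "n > 0"
  shows "hom_count (k+3) (S21_edges k) (n^2+1) (hubE n) = n^(2*k+3) + n^2 * (n^k * (n^2 + (n-1)*n))"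
proof -
  define N where "N = n^2+1"
  define H where "H = n^2"
  define nb where "nb = nbr N (hubE n)"
  define B where "B = (\<lambda>v. {(v div n)*n..<(v div n)*n+n})"
  have nbh: "nb H = {..<H}" unfolding nb_def nbr_def hubE_def N_def H_def by auto
  have Bsub: "B v \<subseteq> {..<H}" and Bv: "v \<in> B v" and cB: "card (B v) = n" if v: "v < H" for v
  proof -
    have q: "v div n < n" using v n unfolding H_def by (simp add: power2_eq_square less_mult_imp_div_less)
    have "Suc (v div n) * n \<le> n * n" using q by (intro mult_le_mono1) simp
    then have "(v div n)*n + n \<le> H" unfolding H_def by (simp add: power2_eq_square)
    then show "B v \<subseteq> {..<H}" unfolding B_def by auto
    show "v \<in> B v" unfolding B_def using div_block[OF n, of v "v div n"] by simp
    show "card (B v) = n" unfolding B_def by simp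
  qed
  have nbv: "nb v = insert H (B v - {v})" if v: "v < H" for v
  proof -
    have bl: "v div n = b div n \<longleftrightarrow> b \<in> B v" for b
      unfolding B_def using div_block[OF n, of b "v div n"] by auto
    show ?thesis
    proof (intro set_eqI iffI)
      fix b assume "b \<in> nb v"
      then show "b \<in> insert H (B v - {v})" using v bl unfolding nb_def nbr_def hubE_def H_def N_def by auto
    next
      fix b assume b: "b \<in> insert H (B v - {v})"
      then show "b \<in> nb v" using v bl Bsub[OF v] unfolding nb_def nbr_def hubE_def H_def N_def by auto
    qed
  qed
  have HB: "H \<notin> B v - {v}" if v: "v < H" for v using Bsub[OF v] by auto
  have finB: "finite (B v)" for v unfolding B_def by simp
  have cv: "card (nb v) = n" if v: "v < H" for v
  proof -
    have "card (nb v) = Suc (card (B v - {v}))" unfolding nbv[OF v] using HB[OF v] finB by simp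
    also have "\<dots> = n" using cB[OF v] Bv[OF v] n finB by simp
    finally show ?thesis .
  qed
  have ch: "card (nb H) = H" using nbh by simp
  have inner: "(\<Sum>u\<in>nb v. card (nb u)) = H + (n-1)*n" if v: "v < H" for v
  proof -
    have "(\<Sum>u\<in>nb v. card (nb u)) = card (nb H) + (\<Sum>u\<in>B v - {v}. card (nb u))"
      unfolding nbv[OF v] using HB[OF v] finB by simp
    also have "(\<Sum>u\<in>B v - {v}. card (nb u)) = (\<Sum>u\<in>B v - {v}. n)"
      using Bsub[OF v] by (intro sum.cong refl cv) auto
    also have "\<dots> = (n-1)*n" using cB[OF v] Bv[OF v] finB by simp
    finally show ?thesis using ch by simp
  qed
  have U: "{..<N} = insert H {..<H}" unfolding N_def H_def by auto
  have "(\<Sum>v<N. \<Sum>u\<in>nb v. card (nb u) * card (nb v) ^ k)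
     = (\<Sum>u\<in>nb H. card (nb u) * card (nb H) ^ k) + (\<Sum>v<H. \<Sum>u\<in>nb v. card (nb u) * card (nb v) ^ k)"
    unfolding U by simp
  also have "(\<Sum>u\<in>nb H. card (nb u) * card (nb H) ^ k) = (\<Sum>u<H. n * H^k)"
    unfolding ch by (subst nbh) (intro sum.cong refl, simp add: cv)
  also have "\<dots> = n^(2*k+3)" unfolding H_def by (simp add: power_mult[symmetric] power_add[symmetric] algebra_simps) (simp add: power_add power_mult power2_eq_square numeral_3_eq_3)
  also have "(\<Sum>v<H. \<Sum>u\<in>nb v. card (nb u) * card (nb v) ^ k) = (\<Sum>v<H. n^k * (H + (n-1)*n))"
  proof (intro sum.cong refl)
    fix v assume "v \<in> {..<H}"
    then have v: "v < H" by simp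
    have "(\<Sum>u\<in>nb v. card (nb u) * card (nb v) ^ k) = (\<Sum>u\<in>nb v. card (nb u)) * n^k"
      by (simp add: cv[OF v] sum_distrib_right)
    then show "(\<Sum>u\<in>nb v. card (nb u) * card (nb v) ^ k) = n^k * (H + (n-1)*n)"
      using inner[OF v] by simp
  qed
  also have "\<dots> = n^2 * (n^k * (n^2 + (n-1)*n))" unfolding H_def by simp
  finally have S: "(\<Sum>v<N. \<Sum>u\<in>nb v. card (nb u) * card (nb v) ^ k) = n^(2*k+3) + n^2 * (n^k * (n^2 + (n-1)*n))" .
  have "hom_count (k+3) (S21_edges k) N (hubE n) = (\<Sum>v<N. \<Sum>u\<in>nb v. card (nb u) * card (nb v) ^ k)"
    unfolding N_def nb_def by (rule hom_S21[OF hub_sg])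
  then show ?thesis using S unfolding N_def by simp
qed



lemma hv0: "hom_vec m N E 0 = real N"
  using hom_S0[of N E] unfolding hom_vec_def by simp

lemma hvi: "1 \<le> i \<Longrightarrow> i \<le> m \<Longrightarrow> hom_vec m N E i = real (hom_count ((i-1)+3) (S21_edges (i-1)) N E)"
  unfolding hom_vec_def by (simp add: numeral_3_eq_3)

lemma at_top_shift: "filterlim (\<lambda>t. real (t + c)) at_top sequentially"
  by (rule filterlim_compose[OF filterlim_real_sequentially filterlim_add_const_nat_at_top])

lemma log_ratio_nat:
  fixes n h :: "nat \<Rightarrow> nat" and a C :: nat
  assumes g: "filterlim (\<lambda>t. real (n t)) at_top sequentially" and C: "C > 0"
    and ev: "\<forall>\<^sub>F t in sequentially. n t ^ a \<le> C * h t \<and> h t \<le> C * n t ^ a"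
  shows "((\<lambda>t. ln (real (h t)) / ln (real (n t))) \<longlongrightarrow> real a) sequentially"
proof (rule log_ratio_limit[OF g, of "1 / real C" "real C"])
  show "0 < 1 / real C" "0 < real C" using C by auto
  show "\<forall>\<^sub>F t in sequentially. 1 / real C * real (n t) ^ a \<le> real (h t) \<and> real (h t) \<le> real C * real (n t) ^ a"
    using ev
  proof eventually_elim
    case (elim t)
    have "real (n t ^ a) \<le> real (C * h t)" "real (h t) \<le> real (C * n t ^ a)"
      using elim by (simp_all only: of_nat_le_iff)
    then show ?case using C by (simp add: field_simps)
  qed
qed



lemma lim_case:
  fixes n h :: "nat \<Rightarrow> nat" and a C :: nat
  assumes hv: "\<And>t. hom_vec m (N t) (E t) i = real (h t)"
    and g: "filterlim (\<lambda>t. real (n t)) at_top sequentially" and C: "C > 0"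
    and b: "\<And>t. n t ^ a \<le> C * h t \<and> h t \<le> C * n t ^ a"
    and d: "d = real a"
  shows "((\<lambda>t. ln (hom_vec m (N t) (E t) i) / ln (real (n t))) \<longlongrightarrow> d) sequentially"
  unfolding hv d by (rule log_ratio_nat[OF g C]) (simp add: b)

lemma d1: "dvec 1 m \<in> trop_N_U m"
proof (rule in_trop[where N="\<lambda>t. t+2" and E="\<lambda>t. edgeE" and g="\<lambda>t. real (t+2)"])
  fix t show "simple_graph (t+2) edgeE" by (rule edge_sg)
  fix i assume im: "i \<le> m"
  show "0 < hom_vec m (t+2) edgeE i"
  proof (cases "i = 0")
    case True then show ?thesis by (simp add: hv0)
  next
    case False
    then show ?thesis using hvi[of i m "t+2" edgeE] edge_count[of "i-1" t] im by simp
  qed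
next
  fix t show "1 \<le> real (t+2)" by simp
next
  fix i assume im: "i \<le> m"
  show "((\<lambda>t. ln (hom_vec m (t+2) edgeE i) / ln (real (t+2))) \<longlongrightarrow> dvec 1 m i) sequentially"
  proof (cases "i = 0")
    case True
    show ?thesis
      by (rule lim_case[where h="\<lambda>t. t+2" and a=1 and C=1, OF _ at_top_shift])
         (simp_all add: True hv0 dvec_def)
  next
    case False
    show ?thesis
      by (rule lim_case[where h="\<lambda>t. 2" and a=0 and C=2, OF _ at_top_shift])
         (use False im hvi[of i m] edge_count[of "i-1"] in \<open>simp_all add: dvec_def\<close>)
  qed
next
  fix i assume "m < i" then show "dvec 1 m i = 0" by (simp add: dvec_def)
qed

lemma d2: "dvec 2 m \<in> trop_N_U m"
proof (rule in_trop[where N="\<lambda>t. 0+2" and E="\<lambda>t. edgeE" and g="\<lambda>t. 2"])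
  fix t show "simple_graph (0+2) edgeE" by (rule edge_sg)
  fix i assume im: "i \<le> m"
  have hv: "hom_vec m (0+2) edgeE i = 2"
  proof (cases "i = 0")
    case True then show ?thesis by (simp add: hv0)
  next
    case False
    then show ?thesis using hvi[of i m "0+2" edgeE] edge_count[of "i-1" 0] im by simp
  qed
  then show "0 < hom_vec m (0+2) edgeE i" by simp
  show "((\<lambda>t. ln (hom_vec m (0+2) edgeE i) / ln 2) \<longlongrightarrow> dvec 2 m i) sequentially"
    using im unfolding hv by (simp add: dvec_def)
next
  fix t show "1 \<le> (2::real)" by simp
next
  fix i assume "m < i" then show "dvec 2 m i = 0" by (simp add: dvec_def)
qed



lemma star_b1: "(n::nat) \<ge> 1 \<Longrightarrow> n^2 \<le> 2 * (n^1 + n^2) \<and> n^1 + n^2 \<le> 2 * n^2"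
  by (simp add: power2_eq_square)

lemma star_b2: "(n::nat) \<ge> 1 \<Longrightarrow> 2 \<le> i \<Longrightarrow> n^i \<le> 2 * (n^i + n^2) \<and> n^i + n^2 \<le> 2 * n^i"
  using power_increasing[of 2 i n] by simp

lemma d3: "dvec 3 m \<in> trop_N_U m"
proof (rule in_trop[where N="\<lambda>t. (t+1)+1" and E="\<lambda>t. starE (t+1)" and g="\<lambda>t. real (t+1)"])
  fix t show "simple_graph ((t+1)+1) (starE (t+1))" by (rule star_sg)
  fix i assume im: "i \<le> m"
  show "0 < hom_vec m ((t+1)+1) (starE (t+1)) i"
  proof (cases "i = 0")
    case True then show ?thesis by (simp add: hv0)
  next
    case False
    have "hom_vec m ((t+1)+1) (starE (t+1)) i = real (hom_count ((i-1)+3) (S21_edges (i-1)) ((t+1)+1) (starE (t+1)))"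
      by (rule hvi) (use False im in auto)
    also have "\<dots> = real ((t+1)^((i-1)+1) + (t+1)^2)" by (simp only: star_count)
    finally show ?thesis by (simp only: of_nat_0_less_iff) simp
  qed
next
  fix t show "1 \<le> real (t+1)" by simp
next
  fix i assume im: "i \<le> m"
  show "((\<lambda>t. ln (hom_vec m ((t+1)+1) (starE (t+1)) i) / ln (real (t+1))) \<longlongrightarrow> dvec 3 m i) sequentially"
  proof -
    consider "i = 0" | "i = 1" | "i \<ge> 2" by linarith
    then show ?thesis
    proof cases
      case 1
      show ?thesis
        by (rule lim_case[where h="\<lambda>t. (t+1)+1" and a=1 and C=2, OF _ at_top_shift])
           (simp_all add: 1 hv0 dvec_def)
    next
      case 2
      show ?thesis
        by (rule lim_case[where h="\<lambda>t. (t+1)^1 + (t+1)^2" and a=2 and C=2, OF _ at_top_shift])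
           (use 2 im hvi[of i m] star_count[of 0] star_b1 in \<open>simp_all add: dvec_def\<close>)
    next
      case 3
      have hv: "hom_vec m ((t+1)+1) (starE (t+1)) i = real ((t+1)^i + (t+1)^2)" for t
        using 3 im hvi[of i m "(t+1)+1" "starE (t+1)"] star_count[of "i-1" "t+1"] by simp
      show ?thesis
        by (rule lim_case[where h="\<lambda>t. (t+1)^i + (t+1)^2" and a=i and C=2, OF hv at_top_shift])
           (use 3 im star_b2 in \<open>simp_all add: dvec_def\<close>)
    qed
  qed
next
  fix i assume "m < i" then show "dvec 3 m i = 0" by (simp add: dvec_def)
qed

lemma comp_b: "(n::nat) \<ge> 2 \<Longrightarrow> n^(i+2) \<le> 2^(i+1) * (n * (n-1)^(i+1)) \<and> n * (n-1)^(i+1) \<le> 2^(i+1) * n^(i+2)"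
proof -
  assume n: "n \<ge> 2"
  have "n^(i+1) \<le> (2*(n-1))^(i+1)" using n by (intro power_mono) auto
  have "n^(i+2) = n * n^(i+1)" by simp
  also have "\<dots> \<le> n * (2*(n-1))^(i+1)" using \<open>n^(i+1) \<le> (2*(n-1))^(i+1)\<close> by (rule mult_le_mono2)
  also have "\<dots> = 2^(i+1) * (n * (n-1)^(i+1))" by (simp only: power_mult_distrib mult.left_commute)
  finally have l: "n^(i+2) \<le> 2^(i+1) * (n * (n-1)^(i+1))" .
  have "(n-1)^(i+1) \<le> n^(i+1)" by (intro power_mono) auto
  then have "n * (n-1)^(i+1) \<le> n^(i+2)" by simp
  also have "\<dots> \<le> 2^(i+1) * n^(i+2)" by simp
  finally show ?thesis using l by simp
qed

lemma d4: "dvec 4 m \<in> trop_N_U m"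
proof (rule in_trop[where N="\<lambda>t. t+2" and E="\<lambda>t. compE (t+2)" and g="\<lambda>t. real (t+2)"])
  fix t show "simple_graph (t+2) (compE (t+2))" by (rule comp_sg)
  fix i assume im: "i \<le> m"
  show "0 < hom_vec m (t+2) (compE (t+2)) i"
  proof (cases "i = 0")
    case True then show ?thesis by (simp add: hv0)
  next
    case False
    have "hom_vec m (t+2) (compE (t+2)) i = real (hom_count ((i-1)+3) (S21_edges (i-1)) (t+2) (compE (t+2)))"
      by (rule hvi) (use False im in auto)
    also have "\<dots> = real ((t+2) * ((t+2)-1)^((i-1)+2))" by (simp only: comp_count)
    finally show ?thesis by (simp only: of_nat_0_less_iff) simp
  qed
next
  fix t show "1 \<le> real (t+2)" by simp
next
  fix i assume im: "i \<le> m"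
  show "((\<lambda>t. ln (hom_vec m (t+2) (compE (t+2)) i) / ln (real (t+2))) \<longlongrightarrow> dvec 4 m i) sequentially"
  proof (cases "i = 0")
    case True
    show ?thesis
      by (rule lim_case[where h="\<lambda>t. t+2" and a=1 and C=1, OF _ at_top_shift])
         (simp_all add: True hv0 dvec_def)
  next
    case False
    have hv: "hom_vec m (t+2) (compE (t+2)) i = real ((t+2) * ((t+2)-1)^(i+1))" for t
      using False im hvi[of i m "t+2" "compE (t+2)"] comp_count[of "i-1" "t+2"] by simp
    have b: "(t+2)^(i+2) \<le> 2^(i+1) * ((t+2) * ((t+2)-1)^(i+1)) \<and> (t+2) * ((t+2)-1)^(i+1) \<le> 2^(i+1) * (t+2)^(i+2)" for t :: nat
      by (rule comp_b) simp
    show ?thesis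
      by (rule lim_case[where h="\<lambda>t. (t+2) * ((t+2)-1)^(i+1)" and a="i+2" and C="2^(i+1)", OF hv at_top_shift _ b])
         (use False im in \<open>simp_all add: dvec_def\<close>)
  qed
next
  fix i assume "m < i" then show "dvec 4 m i = 0" by (simp add: dvec_def)
qed



lemma hub_X: "(n::nat) ^2 \<le> n^2 + (n-1)*n \<and> n^2 + (n-1)*n \<le> 2 * n^2"
proof -
  have "(n-1)*n \<le> n*n" by (intro mult_le_mono1) simp
  then show ?thesis by (simp add: power2_eq_square)
qed

lemma hub_b1:
  assumes n: "(n::nat) \<ge> 1" and k: "k \<ge> 1"
  shows "n^(2*k+3) \<le> 3 * (n^(2*k+3) + n^2 * (n^k * (n^2 + (n-1)*n))) \<and>
         n^(2*k+3) + n^2 * (n^k * (n^2 + (n-1)*n)) \<le> 3 * n^(2*k+3)"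
proof -
  have "n^2 * (n^k * (n^2 + (n-1)*n)) \<le> n^2 * (n^k * (2 * n^2))"
    using hub_X[of n] by (intro mult_le_mono2) simp
  also have "\<dots> = 2 * n^(k+4)" by (simp add: power_add power2_eq_square algebra_simps numeral_eq_Suc)
  also have "\<dots> \<le> 2 * n^(2*k+3)" using n k by (intro mult_le_mono2 power_increasing) auto
  finally show ?thesis by simp
qed

lemma hub_b0:
  assumes n: "(n::nat) \<ge> 1"
  shows "n^4 \<le> 3 * (n^(2*0+3) + n^2 * (n^0 * (n^2 + (n-1)*n))) \<and>
         n^(2*0+3) + n^2 * (n^0 * (n^2 + (n-1)*n)) \<le> 3 * n^4"
proof -
  have X: "n^2 \<le> n^2 + (n-1)*n" "n^2 + (n-1)*n \<le> 2 * n^2" using hub_X[of n] by auto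
  have "n^4 = n^2 * n^2" by (simp add: power_add[symmetric])
  also have "\<dots> \<le> n^2 * (n^2 + (n-1)*n)" using X(1) by (rule mult_le_mono2)
  finally have l: "n^4 \<le> n^2 * (n^2 + (n-1)*n)" .
  have "n^2 * (n^2 + (n-1)*n) \<le> n^2 * (2 * n^2)" using X(2) by (rule mult_le_mono2)
  also have "\<dots> = 2 * n^4" by (simp add: power_add[symmetric])
  finally have u: "n^2 * (n^2 + (n-1)*n) \<le> 2 * n^4" .
  have "n^3 \<le> n^4" using n by (intro power_increasing) auto
  then show ?thesis using l u by simp
qed

lemma d5: "dvec 5 m \<in> trop_N_U m"
proof (rule in_trop[where N="\<lambda>t. (t+1)^2+1" and E="\<lambda>t. hubE (t+1)" and g="\<lambda>t. real (t+1)"])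
  fix t show "simple_graph ((t+1)^2+1) (hubE (t+1))" by (rule hub_sg)
  fix i assume im: "i \<le> m"
  show "0 < hom_vec m ((t+1)^2+1) (hubE (t+1)) i"
  proof (cases "i = 0")
    case True then show ?thesis by (simp only: hv0 of_nat_0_less_iff; simp)
  next
    case False
    have "hom_vec m ((t+1)^2+1) (hubE (t+1)) i = real (hom_count ((i-1)+3) (S21_edges (i-1)) ((t+1)^2+1) (hubE (t+1)))"
      by (rule hvi) (use False im in auto)
    also have "\<dots> = real ((t+1)^(2*(i-1)+3) + (t+1)^2 * ((t+1)^(i-1) * ((t+1)^2 + ((t+1)-1)*(t+1))))"
      by (rule arg_cong[where f=real], rule hub_count) simp
    finally show ?thesis by (simp only: of_nat_0_less_iff) simp
  qed
next
  fix t show "1 \<le> real (t+1)" by simp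
next
  fix i assume im: "i \<le> m"
  show "((\<lambda>t. ln (hom_vec m ((t+1)^2+1) (hubE (t+1)) i) / ln (real (t+1))) \<longlongrightarrow> dvec 5 m i) sequentially"
  proof -
    have hv: "hom_vec m ((t+1)^2+1) (hubE (t+1)) i = real ((t+1)^(2*(i-1)+3) + (t+1)^2 * ((t+1)^(i-1) * ((t+1)^2 + ((t+1)-1)*(t+1))))"
      if "i \<ge> 1" for t
    proof -
      have "hom_vec m ((t+1)^2+1) (hubE (t+1)) i = real (hom_count ((i-1)+3) (S21_edges (i-1)) ((t+1)^2+1) (hubE (t+1)))"
        by (rule hvi) (use that im in auto)
      also have "\<dots> = real ((t+1)^(2*(i-1)+3) + (t+1)^2 * ((t+1)^(i-1) * ((t+1)^2 + ((t+1)-1)*(t+1))))"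
        by (rule arg_cong[where f=real], rule hub_count) simp
      finally show ?thesis .
    qed
    consider "i = 0" | "i = 1" | "i \<ge> 2" by linarith
    then show ?thesis
    proof cases
      case 1
      have b: "(t+1)^2 \<le> 2 * ((t+1)^2+1) \<and> (t+1)^2+1 \<le> 2 * (t+1)^2" for t :: nat
        by (simp add: power2_eq_square)
      show ?thesis
        by (rule lim_case[where h="\<lambda>t. (t+1)^2+1" and a=2 and C=2, OF _ at_top_shift _ b])
           (simp_all add: 1 hv0 dvec_def)
    next
      case 2
      have hv': "hom_vec m ((t+1)^2+1) (hubE (t+1)) i = real ((t+1)^(2*0+3) + (t+1)^2 * ((t+1)^0 * ((t+1)^2 + ((t+1)-1)*(t+1))))" for t
        using hv[of t] 2 by simp
      have b: "(t+1)^4 \<le> 3 * ((t+1)^(2*0+3) + (t+1)^2 * ((t+1)^0 * ((t+1)^2 + ((t+1)-1)*(t+1)))) \<and>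
         (t+1)^(2*0+3) + (t+1)^2 * ((t+1)^0 * ((t+1)^2 + ((t+1)-1)*(t+1))) \<le> 3 * (t+1)^4" for t :: nat
        by (rule hub_b0) simp
      show ?thesis
        by (rule lim_case[where a=4 and C=3, OF hv' at_top_shift _ b])
           (use 2 im in \<open>simp_all add: dvec_def\<close>)
    next
      case 3
      have hv': "hom_vec m ((t+1)^2+1) (hubE (t+1)) i = real ((t+1)^(2*(i-1)+3) + (t+1)^2 * ((t+1)^(i-1) * ((t+1)^2 + ((t+1)-1)*(t+1))))" for t
        using hv[of t] 3 by simp
      have b: "(t+1)^(2*(i-1)+3) \<le> 3 * ((t+1)^(2*(i-1)+3) + (t+1)^2 * ((t+1)^(i-1) * ((t+1)^2 + ((t+1)-1)*(t+1)))) \<and>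
         (t+1)^(2*(i-1)+3) + (t+1)^2 * ((t+1)^(i-1) * ((t+1)^2 + ((t+1)-1)*(t+1))) \<le> 3 * (t+1)^(2*(i-1)+3)" for t :: nat
        by (rule hub_b1) (use 3 in auto)
      show ?thesis
        by (rule lim_case[where a="2*(i-1)+3" and C=3, OF hv' at_top_shift _ b])
           (use 3 im in \<open>simp_all add: dvec_def\<close>)
    qed
  qed
next
  fix i assume "m < i" then show "dvec 5 m i = 0" by (simp add: dvec_def)
qed

theorem lemma4p2:
  fixes m j :: nat
  assumes "m \<ge> 1" and "1 \<le> j" and "j \<le> 5"
  shows "dvec j m \<in> trop_N_U m"
proof -
  have "j = 1 \<or> j = 2 \<or> j = 3 \<or> j = 4 \<or> j = 5" using assms by linarith
  then show ?thesis using d1 d2 d3 d4 d5 by blast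
qed

end
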